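(* For all integers $n\ge 1$, $$s_3(n)=\tfrac{4}{3}n^3-3n^2+\tfrac{8}{3}n-1,\qquad d_3(n)=\tfrac{2}{3}n^4-\tfrac{4}{3}n^3+\tfrac{11}{6}n^2-\tfrac{13}{6}n+1.$$
   Context: For $n\ge 1$, the $2\times n$ board consists of $2n$ unit squares arranged in 2 rows and $n$ columns; two squares are adjacent iff they share an edge. A piece is a nonempty set of squares that is connected under adjacency. A division of the board into $k$ pieces is a partition of the set of all $2n$ squares into exactly $k$ pieces. $d_k(n)$ denotes the number of divisions of the $2\times n$ board into $k$ pieces. $s_k(n)$ denotes the number of such divisions in which the two squares of the rightmost column lie in different pieces. *)

theory Defs
  imports Complex_Main
begin

definition board :: "nat \<Rightarrow> (nat \<times> nat) set" where
  "board n = {(r, c). r < 2 \<and> c < n}"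

definition adjacent :: "nat \<times> nat \<Rightarrow> nat \<times> nat \<Rightarrow> bool" where
  "adjacent p q \<longleftrightarrow>
     (fst p = fst q \<and> (snd p = Suc (snd q) \<or> snd q = Suc (snd p))) \<or>
     (snd p = snd q \<and> (fst p = Suc (fst q) \<or> fst q = Suc (fst p)))"

definition is_piece :: "(nat \<times> nat) set \<Rightarrow> bool" where
  "is_piece S \<longleftrightarrow> S \<noteq> {} \<and>
     (\<forall>p\<in>S. \<forall>q\<in>S. (\<lambda>x y. x \<in> S \<and> y \<in> S \<and> adjacent x y)\<^sup>*\<^sup>* p q)"

definition is_division :: "nat \<Rightarrow> nat \<Rightarrow> (nat \<times> nat) set set \<Rightarrow> bool" where
  "is_division n k P \<longleftrightarrow>
     (\<forall>A\<in>P. is_piece A) \<and> \<Union>P = board n \<and>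
     (\<forall>A\<in>P. \<forall>B\<in>P. A \<noteq> B \<longrightarrow> A \<inter> B = {}) \<and> card P = k"

definition d :: "nat \<Rightarrow> nat \<Rightarrow> nat" where
  "d k n = card {P. is_division n k P}"

definition s :: "nat \<Rightarrow> nat \<Rightarrow> nat" where
  "s k n = card {P. is_division n k P \<and>
     (\<forall>A\<in>P. \<not> ((0, n - 1) \<in> A \<and> (1, n - 1) \<in> A))}"

end

theory Submission imports Defs begin

definition rel :: "(nat \<times> nat) set \<Rightarrow> nat \<times> nat \<Rightarrow> nat \<times> nat \<Rightarrow> bool" where
  "rel S x y \<longleftrightarrow> x \<in> S \<and> y \<in> S \<and> adjacent x y"

lemma is_piece_alt: "is_piece S \<longleftrightarrow> S \<noteq> {} \<and> (\<forall>p\<in>S. \<forall>q\<in>S. (rel S)\<^sup>*\<^sup>* p q)"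
  unfolding is_piece_def rel_def[abs_def] by simp

lemma board_mem[simp]: "((a,b) \<in> board n) = (a < 2 \<and> b < n)"
  unfolding board_def by auto

lemma adj_sym: "adjacent x y = adjacent y x"
  unfolding adjacent_def by auto

lemma rel_sym: "(rel S)\<^sup>*\<^sup>* p q \<Longrightarrow> (rel S)\<^sup>*\<^sup>* q p"
proof (induction rule: rtranclp_induct)
  case base then show ?case by simp
next
  case (step y z)
  then have "rel S z y" using adj_sym by (auto simp: rel_def)
  then show ?case using step.IH by (meson converse_rtranclp_into_rtranclp)
qed

lemma rel_mono: "S \<subseteq> T \<Longrightarrow> (rel S)\<^sup>*\<^sup>* p q \<Longrightarrow> (rel T)\<^sup>*\<^sup>* p q"
  by (rule mono_rtranclp[rule_format]) (auto simp: rel_def)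

lemma piece_root:
  assumes "r \<in> S" "\<forall>p\<in>S. (rel S)\<^sup>*\<^sup>* r p"
  shows "is_piece S"
  unfolding is_piece_alt using assms
  by (metis empty_iff rel_sym rtranclp_trans)

lemma piece_conn: "is_piece S \<Longrightarrow> p \<in> S \<Longrightarrow> q \<in> S \<Longrightarrow> (rel S)\<^sup>*\<^sup>* p q"
  unfolding is_piece_alt by blast

lemma piece_single: "is_piece {x}"
  by (rule piece_root[of x]) auto

lemma piece_insert:
  assumes "is_piece A" "y \<in> A" "adjacent y x"
  shows "is_piece (insert x A)"
proof (rule piece_root[of y])
  show "y \<in> insert x A" using assms by auto
  show "\<forall>p\<in>insert x A. (rel (insert x A))\<^sup>*\<^sup>* y p"
  proof
    fix p assume p: "p \<in> insert x A"
    show "(rel (insert x A))\<^sup>*\<^sup>* y p"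
    proof (cases "p = x")
      case True
      have "rel (insert x A) y x" using assms by (auto simp: rel_def)
      then show ?thesis using True by auto
    next
      case False
      then have "p \<in> A" using p by auto
      then show ?thesis using piece_conn[OF assms(1) assms(2)] rel_mono[of A "insert x A"] by blast
    qed
  qed
qed

lemma piece_pair: "adjacent x y \<Longrightarrow> is_piece {y, x}"
  using piece_insert[OF piece_single, of x x y] by auto

lemma piece_restr:
  assumes X: "is_piece X" "X \<subseteq> board (Suc n)" "X \<inter> board n \<noteq> {}"
  shows "is_piece (X \<inter> board n)"
proof -
  define X' where "X' = X \<inter> board n"
  obtain p where p: "p \<in> X'" using X unfolding X'_def by auto
  have key: "(y \<in> board n \<longrightarrow> (rel X')\<^sup>*\<^sup>* p y) \<and>
     (y \<notin> board n \<longrightarrow> (\<exists>j<2. (j,n-1) \<in> X' \<and> (rel X')\<^sup>*\<^sup>* p (j,n-1)))"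
    if "(rel X)\<^sup>*\<^sup>* p y" for y
    using that
  proof (induction rule: rtranclp_induct)
    case base then show ?case using p by (auto simp: X'_def)
  next
    case (step y z)
    have st: "y \<in> X" "z \<in> X" "adjacent y z" using step(2) by (auto simp: rel_def)
    obtain a b where y: "y = (a,b)" by fastforce
    obtain c e where z: "z = (c,e)" by fastforce
    have yb: "a < 2" "b \<le> n" using st X(2) y by auto
    have zb: "c < 2" "e \<le> n" using st X(2) z by auto
    have adj: "adjacent (a,b) (c,e)" using st y z by auto
    show ?case
    proof (cases "b < n")
      case yin: True
      then have py: "(rel X')\<^sup>*\<^sup>* p y" using step.IH y yb by auto
      show ?thesis
      proof (cases "e < n")
        case True
        then have "rel X' y z" using st y z yin yb zb by (auto simp: X'_def rel_def)
        then have "(rel X')\<^sup>*\<^sup>* p z" using py by (meson rtranclp.rtrancl_into_rtrancl)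
        then show ?thesis using z True zb by auto
      next
        case False
        then have "e = n" using zb by auto
        then have "b = n - 1" "a = c" using adj yin unfolding adjacent_def by auto
        then show ?thesis using py y z zb st yin yb \<open>e = n\<close> by (auto simp: X'_def)
      qed
    next
      case ynot: False
      then have bn: "b = n" using yb by auto
      obtain j where j: "j < 2" "(j,n-1) \<in> X'" "(rel X')\<^sup>*\<^sup>* p (j,n-1)"
        using step.IH y ynot by auto
      show ?thesis
      proof (cases "e < n")
        case True
        then have ea: "e = n - 1" "c = a" using adj bn unfolding adjacent_def by auto
        have zX': "z \<in> X'" using st z True zb by (auto simp: X'_def)
        show ?thesis
        proof (cases "j = a")
          case True then show ?thesis using j z ea by auto
        next
          case False
          then have "adjacent (j,n-1) (c,e)" using j(1) yb ea unfolding adjacent_def by auto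
          then have "rel X' (j,n-1) z" using j zX' z by (auto simp: rel_def)
          then show ?thesis using j z True by (auto intro: rtranclp.rtrancl_into_rtrancl)
        qed
      next
        case False then show ?thesis using j z by auto
      qed
    qed
  qed
  show ?thesis unfolding X'_def[symmetric]
  proof (rule piece_root[OF p], rule)
    fix q assume q: "q \<in> X'"
    then have "(rel X)\<^sup>*\<^sup>* p q" using p X(1) unfolding X'_def is_piece_alt by auto
    then show "(rel X')\<^sup>*\<^sup>* p q" using key q unfolding X'_def by auto
  qed
qed

lemma reach_col:
  assumes X: "is_piece X" "X \<subseteq> board (Suc n)" and i: "i < 2" "(i,n) \<in> X"
    and y: "y \<in> X" "y \<in> board n"
  shows "(1-i,n) \<in> X \<or> (i,n-1) \<in> X"
proof -
  have R: "z = (i,n) \<or> (1-i,n) \<in> X \<or> (i,n-1) \<in> X" if "(rel X)\<^sup>*\<^sup>* (i,n) z" for z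
    using that
  proof (induction rule: rtranclp_induct)
    case base then show ?case by simp
  next
    case (step y z)
    have st: "y \<in> X" "z \<in> X" "adjacent y z" using step(2) by (auto simp: rel_def)
    obtain c e where z: "z = (c,e)" by fastforce
    have zb: "c < 2" "e \<le> n" using st X(2) z by auto
    show ?case
    proof (cases "y = (i,n)")
      case True
      then have "adjacent (i,n) (c,e)" using st z by auto
      then have "(c,e) = (1-i,n) \<or> (c,e) = (i,n-1)" using zb i unfolding adjacent_def by auto
      then show ?thesis using st z by auto
    next
      case False then show ?thesis using step.IH by auto
    qed
  qed
  have "(rel X)\<^sup>*\<^sup>* (i,n) y" using X(1) i y unfolding is_piece_alt by auto
  from R[OF this] show ?thesis using y by auto
qed


lemma reach_col2:
  assumes X: "is_piece X" "X \<subseteq> board (Suc n)" and i: "i < 2" "(i,n) \<in> X"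
    and y: "y \<in> X" "y \<in> board n"
  shows "(0,n-1) \<in> X \<or> (1,n-1) \<in> X"
proof -
  have R: "snd z = n \<or> (0,n-1) \<in> X \<or> (1,n-1) \<in> X" if "(rel X)\<^sup>*\<^sup>* (i,n) z" for z
    using that
  proof (induction rule: rtranclp_induct)
    case base then show ?case by simp
  next
    case (step y z)
    have st: "y \<in> X" "z \<in> X" "adjacent y z" using step(2) by (auto simp: rel_def)
    obtain c e where z: "z = (c,e)" by fastforce
    obtain a b where yy: "y = (a,b)" by fastforce
    have zb: "c < 2" "e \<le> n" using st X(2) z by auto
    have yb: "a < 2" using st X(2) yy by auto
    show ?case
    proof (cases "snd y = n")
      case True
      then have "adjacent (a,n) (c,e)" using st z yy by auto
      then have "e = n \<or> (c,e) = (a,n-1)" using zb unfolding adjacent_def by auto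
      then show ?thesis using st z yb zb by (cases a; cases c) auto
    next
      case False then show ?thesis using step.IH by auto
    qed
  qed
  have "(rel X)\<^sup>*\<^sup>* (i,n) y" using X(1) i y unfolding is_piece_alt by auto
  from R[OF this] show ?thesis using y by (cases y) auto
qed

definition col :: "nat \<Rightarrow> (nat \<times> nat) set" where
  "col n = {(0,n),(1,n)}"

definition EA :: "nat \<Rightarrow> (nat \<times> nat) set \<Rightarrow> (nat \<times> nat) set \<Rightarrow> (nat \<times> nat) set \<Rightarrow> (nat \<times> nat) set" where
  "EA n e0 e1 A = (if (0,n-1) \<in> A then e0 else {}) \<union> (if (1,n-1) \<in> A then e1 else {})"

definition ext :: "nat \<Rightarrow> (nat \<times> nat) set \<Rightarrow> (nat \<times> nat) set \<Rightarrow> (nat \<times> nat) set set \<Rightarrow> (nat \<times> nat) set set \<Rightarrow> (nat \<times> nat) set set" where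
  "ext n e0 e1 N Q = (\<lambda>A. A \<union> EA n e0 e1 A) ` Q \<union> N"

definition restr :: "nat \<Rightarrow> (nat \<times> nat) set set \<Rightarrow> (nat \<times> nat) set set" where
  "restr n P = (\<lambda>X. X \<inter> board n) ` P - {{}}"

lemma col_board: "col n \<inter> board n = {}"
  unfolding col_def by auto

lemma board_Suc: "board (Suc n) = board n \<union> col n"
  unfolding col_def board_def by auto

lemma finite_board: "finite (board n)"
proof -
  have "board n \<subseteq> {..<2} \<times> {..<n}" unfolding board_def by auto
  then show ?thesis by (rule finite_subset) auto
qed

lemma div_finite: "is_division n k P \<Longrightarrow> finite P"
proof -
  assume "is_division n k P"
  then have "P \<subseteq> Pow (board n)" unfolding is_division_def by auto
  then show "finite P" using finite_board by (meson finite_Pow_iff finite_subset)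
qed

lemma div_sub: "is_division n k P \<Longrightarrow> A \<in> P \<Longrightarrow> A \<subseteq> board n"
  unfolding is_division_def by auto

lemma div_ne: "is_division n k P \<Longrightarrow> A \<in> P \<Longrightarrow> A \<noteq> {}"
  unfolding is_division_def is_piece_alt by auto

lemma div_disj: "is_division n k P \<Longrightarrow> A \<in> P \<Longrightarrow> B \<in> P \<Longrightarrow> x \<in> A \<Longrightarrow> x \<in> B \<Longrightarrow> A = B"
  unfolding is_division_def by blast

lemma div_cover: "is_division n k P \<Longrightarrow> x \<in> board n \<Longrightarrow> \<exists>A\<in>P. x \<in> A"
  unfolding is_division_def by auto

lemma EA_sub: "e0 \<subseteq> col n \<Longrightarrow> e1 \<subseteq> col n \<Longrightarrow> EA n e0 e1 A \<subseteq> col n"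
  unfolding EA_def by auto

lemma subset_pair: "E \<subseteq> {a,b} \<Longrightarrow> E = {} \<or> E = {a} \<or> E = {b} \<or> E = {a,b}"
  by auto

lemma piece_addcol:
  assumes A: "is_piece A" and n: "n \<ge> 1" and E: "E \<subseteq> col n"
    and c0: "(0,n) \<in> E \<Longrightarrow> (0,n-1) \<in> A \<or> ((1,n) \<in> E \<and> (1,n-1) \<in> A)"
    and c1: "(1,n) \<in> E \<Longrightarrow> (1,n-1) \<in> A \<or> ((0,n) \<in> E \<and> (0,n-1) \<in> A)"
  shows "is_piece (A \<union> E)"
proof -
  have a0: "adjacent (0,n-1) (0,n)" "adjacent (1,n-1) (1,n)" "adjacent (0,n) (1,n)" "adjacent (1,n) (0,n)"
    using n unfolding adjacent_def by auto
  consider "E = {}" | "E = {(0,n)}" | "E = {(1,n)}" | "E = {(0,n),(1,n)}"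
    using subset_pair[of E "(0,n)" "(1,n)"] E unfolding col_def by blast
  then show ?thesis
  proof cases
    case 1 then show ?thesis using A by simp
  next
    case 2 then show ?thesis using c0 piece_insert[OF A _ a0(1)] by auto
  next
    case 3 then show ?thesis using c1 piece_insert[OF A _ a0(2)] by auto
  next
    case 4
    show ?thesis
    proof (cases "(0,n-1) \<in> A")
      case True
      have "is_piece (insert (1,n) (insert (0,n) A))"
        by (rule piece_insert[OF piece_insert[OF A True a0(1)] _ a0(3)]) simp
      then show ?thesis using 4 by (simp add: insert_commute)
    next
      case False
      then have "(1,n-1) \<in> A" using c0 4 by auto
      have "is_piece (insert (0,n) (insert (1,n) A))"
        by (rule piece_insert[OF piece_insert[OF A \<open>(1,n-1) \<in> A\<close> a0(2)] _ a0(4)]) simp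
      then show ?thesis using 4 by auto
    qed
  qed
qed

lemma EA_restore:
  assumes "A \<subseteq> board n" "e0 \<subseteq> col n" "e1 \<subseteq> col n"
  shows "(A \<union> EA n e0 e1 A) \<inter> board n = A"
  using assms EA_sub[OF assms(2,3), of A] col_board[of n] by blast

lemma ext_card:
  assumes Q: "finite Q" "\<forall>A\<in>Q. A \<subseteq> board n \<and> A \<noteq> {}"
    and e: "e0 \<subseteq> col n" "e1 \<subseteq> col n" and N: "finite N" "\<forall>X\<in>N. X \<subseteq> col n"
  shows "card (ext n e0 e1 N Q) = card Q + card N"
proof -
  have inj: "inj_on (\<lambda>A. A \<union> EA n e0 e1 A) Q"
    by (rule inj_on_inverseI[where g = "\<lambda>X. X \<inter> board n"]) (use EA_restore e Q in auto)
  have disj: "(\<lambda>A. A \<union> EA n e0 e1 A) ` Q \<inter> N = {}"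
  proof (rule ccontr)
    assume "(\<lambda>A. A \<union> EA n e0 e1 A) ` Q \<inter> N \<noteq> {}"
    then obtain A where A: "A \<in> Q" "A \<union> EA n e0 e1 A \<in> N" by auto
    then have "A \<subseteq> col n" using N by auto
    moreover have "A \<subseteq> board n" "A \<noteq> {}" using A Q by auto
    ultimately show False using col_board by blast
  qed
  show ?thesis unfolding ext_def
    using card_Un_disjoint[OF finite_imageI[OF Q(1)] N(1) disj] card_image[OF inj] by simp
qed

lemma ext_restr:
  assumes Q: "\<forall>A\<in>Q. A \<subseteq> board n \<and> A \<noteq> {}"
    and e: "e0 \<subseteq> col n" "e1 \<subseteq> col n" and N: "\<forall>X\<in>N. X \<subseteq> col n"
  shows "restr n (ext n e0 e1 N Q) = Q"
proof -
  have 1: "(\<lambda>X. X \<inter> board n) ` ((\<lambda>A. A \<union> EA n e0 e1 A) ` Q) = Q"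
    using EA_restore[OF _ e] Q by (simp add: image_image)
  have 2: "(\<lambda>X. X \<inter> board n) ` N \<subseteq> {{}}" using N col_board by blast
  have 3: "{} \<notin> Q" using Q by auto
  show ?thesis unfolding restr_def ext_def image_Un 1 using 2 3 by blast
qed

lemma ext_div:
  assumes n: "n \<ge> 1" and Q: "is_division n k Q"
    and e: "e0 \<subseteq> col n" "e1 \<subseteq> col n"
    and N: "finite N" "\<forall>X\<in>N. X \<subseteq> col n \<and> is_piece X" "\<forall>X\<in>N. \<forall>Y\<in>N. X \<noteq> Y \<longrightarrow> X \<inter> Y = {}"
    and cov: "e0 \<union> e1 \<union> \<Union>N = col n" and dN: "\<Union>N \<inter> (e0 \<union> e1) = {}"
    and sepQ: "(\<forall>A\<in>Q. (0,n-1) \<in> A \<longrightarrow> (1,n-1) \<notin> A) \<Longrightarrow> e0 \<inter> e1 = {}"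
    and c0: "(1,n) \<in> e0 \<Longrightarrow> (0,n) \<in> e0" and c1: "(0,n) \<in> e1 \<Longrightarrow> (1,n) \<in> e1"
  shows "is_division (Suc n) (k + card N) (ext n e0 e1 N Q)"
proof -
  have Qf: "finite Q" using div_finite[OF Q] .
  have Qs: "\<forall>A\<in>Q. A \<subseteq> board n \<and> A \<noteq> {}" using div_sub[OF Q] div_ne[OF Q] by blast
  have Nc: "\<forall>X\<in>N. X \<subseteq> col n" using N by blast
  have cardQ: "card Q = k" using Q unfolding is_division_def by auto
  have u0: "(0,n-1) \<in> board n" "(1,n-1) \<in> board n" using n by auto
  obtain A0 where A0: "A0 \<in> Q" "(0,n-1) \<in> A0" using div_cover[OF Q u0(1)] by blast
  obtain A1 where A1: "A1 \<in> Q" "(1,n-1) \<in> A1" using div_cover[OF Q u0(2)] by blast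
  have pieces: "\<forall>X\<in>ext n e0 e1 N Q. is_piece X"
  proof
    fix X assume "X \<in> ext n e0 e1 N Q"
    then consider "X \<in> N" | A where "A \<in> Q" "X = A \<union> EA n e0 e1 A" unfolding ext_def by blast
    then show "is_piece X"
    proof cases
      case 1 then show ?thesis using N by auto
    next
      case 2
      have pA: "is_piece A" using Q 2 unfolding is_division_def by auto
      show ?thesis unfolding 2(2)
        by (rule piece_addcol[OF pA n EA_sub[OF e]];
            cases "(0,n-1) \<in> A"; cases "(1,n-1) \<in> A") (use c0 c1 in \<open>auto simp: EA_def\<close>)
    qed
  qed
  have union: "\<Union>(ext n e0 e1 N Q) = board (Suc n)"
  proof
    show "\<Union>(ext n e0 e1 N Q) \<subseteq> board (Suc n)"
    proof
      fix x assume "x \<in> \<Union>(ext n e0 e1 N Q)"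
      then obtain X where X: "X \<in> ext n e0 e1 N Q" "x \<in> X" by blast
      then consider "X \<in> N" | A where "A \<in> Q" "X = A \<union> EA n e0 e1 A" unfolding ext_def by blast
      then show "x \<in> board (Suc n)"
      proof cases
        case 1 then show ?thesis using Nc X unfolding board_Suc by blast
      next
        case 2 then show ?thesis using Qs X EA_sub[OF e, of A] unfolding board_Suc by blast
      qed
    qed
    have mem: "A \<union> EA n e0 e1 A \<in> ext n e0 e1 N Q" if "A \<in> Q" for A
      unfolding ext_def using that by blast
    have h1: "board n \<subseteq> \<Union>(ext n e0 e1 N Q)"
    proof
      fix x assume "x \<in> board n"
      then obtain A where "A \<in> Q" "x \<in> A" using div_cover[OF Q] by blast
      then show "x \<in> \<Union>(ext n e0 e1 N Q)" using mem[of A] by blast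
    qed
    have h2: "e0 \<subseteq> \<Union>(ext n e0 e1 N Q)"
    proof -
      have "e0 \<subseteq> EA n e0 e1 A0" using A0 by (simp add: EA_def)
      then show ?thesis using mem[OF A0(1)] by blast
    qed
    have h3: "e1 \<subseteq> \<Union>(ext n e0 e1 N Q)"
    proof -
      have "e1 \<subseteq> EA n e0 e1 A1" using A1 by (simp add: EA_def)
      then show ?thesis using mem[OF A1(1)] by blast
    qed
    have "N \<subseteq> ext n e0 e1 N Q"
      unfolding ext_def by (rule Un_upper2)
    then have h4: "\<Union>N \<subseteq> \<Union>(ext n e0 e1 N Q)" by (rule Union_mono)
    have "col n \<subseteq> \<Union>(ext n e0 e1 N Q)" unfolding cov[symmetric] using h2 h3 h4 by (intro Un_least)
    then show "board (Suc n) \<subseteq> \<Union>(ext n e0 e1 N Q)"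
      unfolding board_Suc using h1 by (intro Un_least)
  qed
  have disj: "\<forall>X\<in>ext n e0 e1 N Q. \<forall>Y\<in>ext n e0 e1 N Q. X \<noteq> Y \<longrightarrow> X \<inter> Y = {}"
  proof (intro ballI impI)
    fix X Y assume X: "X \<in> ext n e0 e1 N Q" and Y: "Y \<in> ext n e0 e1 N Q" and XY: "X \<noteq> Y"
    have imgN: "(A \<union> EA n e0 e1 A) \<inter> Z = {}" if "A \<in> Q" "Z \<in> N" for A Z
    proof -
      have "A \<subseteq> board n" using Qs that(1) by blast
      moreover have "Z \<subseteq> col n" "Z \<subseteq> \<Union>N" using Nc that(2) by blast+
      moreover have "EA n e0 e1 A \<subseteq> e0 \<union> e1" unfolding EA_def by auto
      ultimately show ?thesis using col_board[of n] dN by blast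
    qed
    have imgimg: "(A \<union> EA n e0 e1 A) \<inter> (B \<union> EA n e0 e1 B) = {}" if AQ: "A \<in> Q" "B \<in> Q" "A \<noteq> B" for A B
    proof -
      have AB: "A \<inter> B = {}" using div_disj[OF Q AQ(1,2)] AQ(3) by blast
      have "A \<subseteq> board n" "B \<subseteq> board n" using Qs AQ by blast+
      moreover have "EA n e0 e1 A \<subseteq> col n" "EA n e0 e1 B \<subseteq> col n" using EA_sub[OF e] by blast+
      ultimately have AE: "A \<inter> EA n e0 e1 B = {}" "B \<inter> EA n e0 e1 A = {}"
        using col_board[of n] by blast+
      have sp: "e0 \<inter> e1 = {}" if "C \<in> Q" "D \<in> Q" "C \<noteq> D" "(0,n-1) \<in> C" "(1,n-1) \<in> D" for C D
      proof (rule sepQ, intro ballI impI)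
        fix F assume F: "F \<in> Q" "(0,n-1) \<in> F"
        then have "F = C" using div_disj[OF Q F(1) that(1) F(2) that(4)] by blast
        show "(1,n-1) \<notin> F"
        proof
          assume "(1,n-1) \<in> F"
          then have "F = D" using div_disj[OF Q F(1) that(2) _ that(5)] by blast
          then show False using \<open>F = C\<close> that(3) by simp
        qed
      qed
      have EE: "EA n e0 e1 A \<inter> EA n e0 e1 B = {}"
      proof (cases "(0,n-1) \<in> A"; cases "(1,n-1) \<in> A"; cases "(0,n-1) \<in> B"; cases "(1,n-1) \<in> B")
      qed (use AB sp[OF AQ] sp[OF AQ(2,1) AQ(3)[symmetric]] in \<open>simp_all add: EA_def Int_commute; blast\<close>)+
      show ?thesis using AB AE EE by blast
    qed
    from X consider "X \<in> N" | A where "A \<in> Q" "X = A \<union> EA n e0 e1 A" unfolding ext_def by blast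
    then show "X \<inter> Y = {}"
    proof cases
      case 1
      from Y consider "Y \<in> N" | B where "B \<in> Q" "Y = B \<union> EA n e0 e1 B" unfolding ext_def by blast
      then show ?thesis
      proof cases
        case 1 then show ?thesis using N(3) \<open>X \<in> N\<close> XY by blast
      next
        case 2 then show ?thesis using imgN[of B X] \<open>X \<in> N\<close> by blast
      qed
    next
      case (2 A)
      from Y consider "Y \<in> N" | B where "B \<in> Q" "Y = B \<union> EA n e0 e1 B" unfolding ext_def by blast
      then show ?thesis
      proof cases
        case 1 then show ?thesis using imgN[of A Y] 2 by blast
      next
        case (2 B)
        then have "A \<noteq> B" using XY \<open>X = A \<union> EA n e0 e1 A\<close> by blast
        then show ?thesis using imgimg[of A B] 2 \<open>A \<in> Q\<close> \<open>X = A \<union> EA n e0 e1 A\<close> by blast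
      qed
    qed
  qed
  show ?thesis unfolding is_division_def
    using pieces union disj ext_card[OF Qf Qs e N(1) Nc] cardQ by auto
qed


lemma piece_mem_board: "is_division m k P \<Longrightarrow> X \<in> P \<Longrightarrow> X \<subseteq> board m"
  by (rule div_sub)

lemma decomp:
  assumes n: "n \<ge> 1" and P: "is_division (Suc n) k P"
  defines "Q \<equiv> restr n P" and "N \<equiv> {X\<in>P. X \<subseteq> col n}"
    and "e0 \<equiv> col n \<inter> \<Union>{X\<in>P. (0,n-1) \<in> X}"
    and "e1 \<equiv> col n \<inter> \<Union>{X\<in>P. (1,n-1) \<in> X} - col n \<inter> \<Union>{X\<in>P. (0,n-1) \<in> X}"
  shows "is_division n (card Q) Q \<and> P = ext n e0 e1 N Q \<and> k = card Q + card N"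
proof -
  have u: "(0,n-1) \<in> board n" "(1,n-1) \<in> board n" using n by auto
  have e: "e0 \<subseteq> col n" "e1 \<subseteq> col n" unfolding e0_def e1_def by auto
  have e1e0: "e1 = col n \<inter> \<Union>{X\<in>P. (1,n-1) \<in> X} - e0" unfolding e1_def e0_def ..
  have Un0: "\<Union>{Y\<in>P. (0,n-1) \<in> Y} = X" if "X \<in> P" "(0,n-1) \<in> X" for X
    using div_disj[OF P] that by blast
  have Un1: "\<Union>{Y\<in>P. (1,n-1) \<in> Y} = X" if "X \<in> P" "(1,n-1) \<in> X" for X
    using div_disj[OF P] that by blast
  have key: "X \<inter> board n \<noteq> {} \<and> X = (X \<inter> board n) \<union> EA n e0 e1 (X \<inter> board n)"
    if X: "X \<in> P" "\<not> X \<subseteq> col n" for X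
  proof -
    have Xs: "X \<subseteq> board n \<union> col n" using div_sub[OF P X(1)] board_Suc by auto
    then have ne: "X \<inter> board n \<noteq> {}" using X(2) by blast
    then obtain y where y: "y \<in> X" "y \<in> board n" by blast
    have pX: "is_piece X" using P X(1) unfolding is_division_def by auto
    have Xs': "X \<subseteq> board (Suc n)" using div_sub[OF P X(1)] .
    have r0: "(0,n) \<in> X \<Longrightarrow> (1,n) \<in> X \<or> (0,n-1) \<in> X"
      using reach_col[OF pX Xs', of 0 y] y by auto
    have r1: "(1,n) \<in> X \<Longrightarrow> (0,n) \<in> X \<or> (1,n-1) \<in> X"
      using reach_col[OF pX Xs', of 1 y] y by auto
    have Xeq: "X = (X \<inter> board n) \<union> (X \<inter> col n)" using Xs by blast
    have m0: "((0,n-1) \<in> X \<inter> board n) = ((0,n-1) \<in> X)" using u by blast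
    have m1: "((1,n-1) \<in> X \<inter> board n) = ((1,n-1) \<in> X)" using u by blast
    have "EA n e0 e1 (X \<inter> board n) = X \<inter> col n"
    proof (cases "(0,n-1) \<in> X")
      case True
      then have E0: "e0 = col n \<inter> X" unfolding e0_def using Un0[OF X(1)] by simp
      show ?thesis
      proof (cases "(1,n-1) \<in> X")
        case True
        then have "e1 = {}" unfolding e1e0 using Un1[OF X(1)] E0 by auto
        then show ?thesis unfolding EA_def m0 m1 using True \<open>(0,n-1) \<in> X\<close> E0 by auto
      next
        case False
        then show ?thesis unfolding EA_def m0 m1 using \<open>(0,n-1) \<in> X\<close> E0 by auto
      qed
    next
      case False
      note F0 = False
      show ?thesis
      proof (cases "(1,n-1) \<in> X")
        case True
        have "(0,n-1) \<in> board (Suc n)" by simp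
        then obtain Y where Y: "Y \<in> P" "(0,n-1) \<in> Y" using div_cover[OF P] by blast
        have "Y \<noteq> X" using Y F0 by auto
        then have YX: "Y \<inter> X = {}" using P Y X unfolding is_division_def by auto
        have E0: "e0 = col n \<inter> Y" unfolding e0_def using Un0[OF Y] by simp
        have "e1 = col n \<inter> X" unfolding e1e0 using Un1[OF X(1) True] E0 YX by auto
        then show ?thesis unfolding EA_def m0 m1 using True F0 by auto
      next
        case False
        then have "X \<inter> col n = {}" using reach_col2[OF pX Xs', of 0 y] reach_col2[OF pX Xs', of 1 y] y F0 unfolding col_def by auto
        then show ?thesis unfolding EA_def m0 m1 using False F0 by auto
      qed
    qed
    then show ?thesis using ne Xeq by simp
  qed
  have Qchar: "A \<in> Q \<longleftrightarrow> (\<exists>X\<in>P. A = X \<inter> board n \<and> A \<noteq> {})" for A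
    unfolding Q_def restr_def by blast
  have ext_eq: "P = ext n e0 e1 N Q"
  proof
    show "P \<subseteq> ext n e0 e1 N Q"
    proof
      fix X assume X: "X \<in> P"
      show "X \<in> ext n e0 e1 N Q"
      proof (cases "X \<subseteq> col n")
        case True then show ?thesis unfolding ext_def N_def using X by blast
      next
        case False
        then have k: "X \<inter> board n \<noteq> {}" "X = (X \<inter> board n) \<union> EA n e0 e1 (X \<inter> board n)"
          using key X by blast+
        have "X \<inter> board n \<in> Q" using Qchar X k(1) by blast
        then show ?thesis unfolding ext_def using k(2) by blast
      qed
    qed
    show "ext n e0 e1 N Q \<subseteq> P"
    proof
      fix Z assume "Z \<in> ext n e0 e1 N Q"
      then consider "Z \<in> N" | A where "A \<in> Q" "Z = A \<union> EA n e0 e1 A" unfolding ext_def by blast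
      then show "Z \<in> P"
      proof cases
        case 1 then show ?thesis unfolding N_def by blast
      next
        case 2
        then obtain X where X: "X \<in> P" "A = X \<inter> board n" "A \<noteq> {}" using Qchar by blast
        then have "\<not> X \<subseteq> col n" using col_board by blast
        then have "X = A \<union> EA n e0 e1 A" using key X by blast
        then show ?thesis using 2 X by simp
      qed
    qed
  qed
  have Qs: "\<forall>A\<in>Q. A \<subseteq> board n \<and> A \<noteq> {}" using Qchar by blast
  have Qf: "finite Q"
  proof -
    have "Q \<subseteq> Pow (board n)" using Qs by blast
    then show ?thesis using finite_board by (meson finite_Pow_iff finite_subset)
  qed
  have Nf: "finite N" unfolding N_def using div_finite[OF P] by simp
  have Nc: "\<forall>X\<in>N. X \<subseteq> col n" unfolding N_def by blast
  have cardP: "card P = k" using P unfolding is_division_def by auto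
  have kk: "k = card Q + card N"
    using ext_card[OF Qf Qs e Nf Nc] ext_eq cardP by simp
  have Qdiv: "is_division n (card Q) Q"
    unfolding is_division_def
  proof (intro conjI ballI impI)
    fix A assume "A \<in> Q"
    then obtain X where X: "X \<in> P" "A = X \<inter> board n" "A \<noteq> {}" using Qchar by blast
    have "is_piece X" using P X unfolding is_division_def by auto
    then show "is_piece A" using piece_restr[OF _ div_sub[OF P X(1)]] X by blast
  next
    show "\<Union>Q = board n"
    proof
      show "\<Union>Q \<subseteq> board n" using Qs by blast
      show "board n \<subseteq> \<Union>Q"
      proof
        fix x assume x: "x \<in> board n"
        then have "x \<in> board (Suc n)" unfolding board_Suc by blast
        then obtain X where "X \<in> P" "x \<in> X" using div_cover[OF P] by blast
        then have "X \<inter> board n \<in> Q" using x Qchar by blast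
        then show "x \<in> \<Union>Q" using x \<open>x \<in> X\<close> by blast
      qed
    qed
  next
    fix A B assume AB: "A \<in> Q" "B \<in> Q" "A \<noteq> B"
    then obtain X Y where "X \<in> P" "A = X \<inter> board n" "Y \<in> P" "B = Y \<inter> board n" using Qchar by metis
    then show "A \<inter> B = {}" using AB(3) div_disj[OF P] by blast
  qed simp
  show ?thesis using Qdiv ext_eq kk by blast
qed


definition sepd :: "nat \<Rightarrow> (nat \<times> nat) set set \<Rightarrow> bool" where
  "sepd m P \<longleftrightarrow> (\<forall>A\<in>P. \<not> ((0, m - 1) \<in> A \<and> (1, m - 1) \<in> A))"

definition Dset :: "nat \<Rightarrow> nat \<Rightarrow> (nat \<times> nat) set set set" where
  "Dset n k = {P. is_division n k P}"
definition Sset :: "nat \<Rightarrow> nat \<Rightarrow> (nat \<times> nat) set set set" where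
  "Sset n k = {P. is_division n k P \<and> sepd n P}"
definition Tset :: "nat \<Rightarrow> nat \<Rightarrow> (nat \<times> nat) set set set" where
  "Tset n k = {P. is_division n k P \<and> \<not> sepd n P}"

lemma Un_piece: "is_division m k P \<Longrightarrow> Y \<in> P \<Longrightarrow> u \<in> Y \<Longrightarrow> \<Union>{X\<in>P. u \<in> X} = Y"
  using div_disj by blast

lemma ext_swap:
  assumes Q: "is_division n k Q" and C: "C \<in> Q" "(0,n-1) \<in> C" "(1,n-1) \<in> C"
    and e: "e0 \<union> e1 = e0' \<union> e1'"
  shows "ext n e0 e1 N Q = ext n e0' e1' N Q"
proof -
  have "EA n e0 e1 A = EA n e0' e1' A" if "A \<in> Q" for A
  proof -
    have "((0,n-1) \<in> A) = (A = C)" "((1,n-1) \<in> A) = (A = C)"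
      using div_disj[OF Q that C(1)] C by blast+
    then show ?thesis unfolding EA_def using e by auto
  qed
  then show ?thesis unfolding ext_def by (metis (no_types, lifting) image_cong)
qed

lemma col_piece: "n \<ge> 1 \<Longrightarrow> is_piece (col n)"
  unfolding col_def by (rule piece_pair) (auto simp: adjacent_def)

lemma T_img1:
  assumes n: "n \<ge> 1" and Q: "Q \<in> Dset n j"
  shows "ext n {} {} {col n} Q \<in> Tset (Suc n) (Suc j)"
proof -
  have Q': "is_division n j Q" using Q unfolding Dset_def by simp
  have "is_division (Suc n) (j + card {col n}) (ext n {} {} {col n} Q)"
    by (rule ext_div[OF n Q']) (use col_piece[OF n] in auto)
  moreover have "\<not> sepd (Suc n) (ext n {} {} {col n} Q)"
    unfolding sepd_def ext_def col_def by auto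
  ultimately show ?thesis unfolding Tset_def by simp
qed

lemma T_img2:
  assumes n: "n \<ge> 1" and Q: "Q \<in> Dset n (Suc j)"
  shows "ext n (col n) {} {} Q \<in> Tset (Suc n) (Suc j)"
proof -
  have Q': "is_division n (Suc j) Q" using Q unfolding Dset_def by simp
  have "is_division (Suc n) (Suc j + card ({}::(nat \<times> nat) set set)) (ext n (col n) {} {} Q)"
    by (rule ext_div[OF n Q']) (auto simp: col_def)
  moreover have "\<not> sepd (Suc n) (ext n (col n) {} {} Q)"
  proof -
    have "(0,n-1) \<in> board n" using n by simp
    then obtain A where A: "A \<in> Q" "(0,n-1) \<in> A" using div_cover[OF Q'] by blast
    then have X: "A \<union> EA n (col n) {} A \<in> ext n (col n) {} {} Q" unfolding ext_def by blast
    have "col n \<subseteq> A \<union> EA n (col n) {} A" using A unfolding EA_def by simp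
    then have c: "(0,n) \<in> A \<union> EA n (col n) {} A" "(1,n) \<in> A \<union> EA n (col n) {} A" unfolding col_def by blast+
    show ?thesis unfolding sepd_def using X c by (metis diff_Suc_1)
  qed
  ultimately show ?thesis unfolding Tset_def by simp
qed

lemma T_img3:
  assumes n: "n \<ge> 1" and Q: "Q \<in> Sset n (Suc j)"
  shows "ext n {} (col n) {} Q \<in> Tset (Suc n) (Suc j)"
proof -
  have Q': "is_division n (Suc j) Q" using Q unfolding Sset_def by simp
  have "is_division (Suc n) (Suc j + card ({}::(nat \<times> nat) set set)) (ext n {} (col n) {} Q)"
    by (rule ext_div[OF n Q']) (auto simp: col_def)
  moreover have "\<not> sepd (Suc n) (ext n {} (col n) {} Q)"
  proof -
    have "(1,n-1) \<in> board n" using n by simp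
    then obtain A where A: "A \<in> Q" "(1,n-1) \<in> A" using div_cover[OF Q'] by blast
    then have X: "A \<union> EA n {} (col n) A \<in> ext n {} (col n) {} Q" unfolding ext_def by blast
    have "col n \<subseteq> A \<union> EA n {} (col n) A" using A unfolding EA_def by simp
    then have c: "(0,n) \<in> A \<union> EA n {} (col n) A" "(1,n) \<in> A \<union> EA n {} (col n) A" unfolding col_def by blast+
    show ?thesis unfolding sepd_def using X c by (metis diff_Suc_1)
  qed
  ultimately show ?thesis unfolding Tset_def by simp
qed

lemma sep_ext:
  assumes Q: "is_division n k Q" and N: "\<forall>X\<in>N. \<not> ((0,n) \<in> X \<and> (1,n) \<in> X)"
    and E: "\<And>A. A \<in> Q \<Longrightarrow> \<not> ((0,n) \<in> EA n e0 e1 A \<and> (1,n) \<in> EA n e0 e1 A)"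
  shows "sepd (Suc n) (ext n e0 e1 N Q)"
  unfolding sepd_def diff_Suc_1
proof
  fix X assume "X \<in> ext n e0 e1 N Q"
  then consider "X \<in> N" | A where "A \<in> Q" "X = A \<union> EA n e0 e1 A" unfolding ext_def by blast
  then show "\<not> ((0, n) \<in> X \<and> (1, n) \<in> X)"
  proof cases
    case 1 then show ?thesis using N by blast
  next
    case 2
    have "(0,n) \<notin> A" "(1,n) \<notin> A" using div_sub[OF Q 2(1)] by auto
    then show ?thesis using E[OF 2(1)] 2(2) by blast
  qed
qed

lemma S_img1:
  assumes n: "n \<ge> 1" and Q: "Q \<in> Dset n j"
  shows "ext n {} {} {{(0,n)},{(1,n)}} Q \<in> Sset (Suc n) (Suc (Suc j))"
proof -
  have Q': "is_division n j Q" using Q unfolding Dset_def by simp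
  have "is_division (Suc n) (j + card {{(0::nat,n)},{(1,n)}}) (ext n {} {} {{(0,n)},{(1,n)}} Q)"
    by (rule ext_div[OF n Q']) (auto simp: col_def piece_single)
  moreover have "card {{(0::nat,n)},{(1::nat,n)}} = 2" by simp
  moreover have "sepd (Suc n) (ext n {} {} {{(0,n)},{(1,n)}} Q)"
    by (rule sep_ext[OF Q']) (auto simp: EA_def)
  ultimately show ?thesis unfolding Sset_def by simp
qed

lemma S_img2:
  assumes n: "n \<ge> 1" and Q: "Q \<in> Dset n (Suc j)"
  shows "ext n {} {(1,n)} {{(0,n)}} Q \<in> Sset (Suc n) (Suc (Suc j))"
proof -
  have Q': "is_division n (Suc j) Q" using Q unfolding Dset_def by simp
  have "is_division (Suc n) (Suc j + card {{(0::nat,n)}}) (ext n {} {(1,n)} {{(0,n)}} Q)"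
    by (rule ext_div[OF n Q']) (auto simp: col_def piece_single)
  moreover have "sepd (Suc n) (ext n {} {(1,n)} {{(0,n)}} Q)"
    by (rule sep_ext[OF Q']) (auto simp: EA_def)
  ultimately show ?thesis unfolding Sset_def by simp
qed

lemma S_img3:
  assumes n: "n \<ge> 1" and Q: "Q \<in> Dset n (Suc j)"
  shows "ext n {(0,n)} {} {{(1,n)}} Q \<in> Sset (Suc n) (Suc (Suc j))"
proof -
  have Q': "is_division n (Suc j) Q" using Q unfolding Dset_def by simp
  have "is_division (Suc n) (Suc j + card {{(1::nat,n)}}) (ext n {(0,n)} {} {{(1,n)}} Q)"
    by (rule ext_div[OF n Q']) (auto simp: col_def piece_single)
  moreover have "sepd (Suc n) (ext n {(0,n)} {} {{(1,n)}} Q)"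
    by (rule sep_ext[OF Q']) (auto simp: EA_def)
  ultimately show ?thesis unfolding Sset_def by simp
qed

lemma S_img4:
  assumes n: "n \<ge> 1" and Q: "Q \<in> Sset n k"
  shows "ext n {(0,n)} {(1,n)} {} Q \<in> Sset (Suc n) k"
proof -
  have Q': "is_division n k Q" and sQ: "sepd n Q" using Q unfolding Sset_def by simp_all
  have "is_division (Suc n) (k + card ({}::(nat \<times> nat) set set)) (ext n {(0,n)} {(1,n)} {} Q)"
    by (rule ext_div[OF n Q']) (auto simp: col_def)
  moreover have "sepd (Suc n) (ext n {(0,n)} {(1,n)} {} Q)"
    by (rule sep_ext[OF Q']) (use sQ in \<open>auto simp: EA_def sepd_def\<close>)
  ultimately show ?thesis unfolding Sset_def by simp
qed


lemma T_sub:
  assumes n: "n \<ge> 1" and PT: "P \<in> Tset (Suc n) (Suc j)"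
  shows "P \<in> ext n {} {} {col n} ` Dset n j \<union> ext n (col n) {} {} ` Dset n (Suc j) \<union> ext n {} (col n) {} ` Sset n (Suc j)"
proof -
  have P: "is_division (Suc n) (Suc j) P" and nsep: "\<not> sepd (Suc n) P" using PT unfolding Tset_def by auto
  obtain X where X: "X \<in> P" "(0,n) \<in> X" "(1,n) \<in> X" using nsep unfolding sepd_def by auto
  define Q where "Q = restr n P"
  define N where "N = {X\<in>P. X \<subseteq> col n}"
  define e0 where "e0 = col n \<inter> \<Union>{X\<in>P. (0,n-1) \<in> X}"
  define e1 where "e1 = col n \<inter> \<Union>{X\<in>P. (1,n-1) \<in> X} - col n \<inter> \<Union>{X\<in>P. (0,n-1) \<in> X}"
  have D: "is_division n (card Q) Q" "P = ext n e0 e1 N Q" "Suc j = card Q + card N"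
    using decomp[OF n P] unfolding Q_def N_def e0_def e1_def by auto
  have e1': "e1 = col n \<inter> \<Union>{X\<in>P. (1,n-1) \<in> X} - e0" unfolding e0_def e1_def ..
  have colX: "col n \<subseteq> X" using X unfolding col_def by auto
  have Nsub: "Y = X" if "Y \<in> N" for Y
  proof -
    have "Y \<subseteq> col n" "Y \<in> P" using that unfolding N_def by auto
    moreover have "Y \<noteq> {}" using div_ne[OF P] \<open>Y \<in> P\<close> by blast
    ultimately obtain c where "c \<in> Y" "c \<in> X" using colX by blast
    then show ?thesis using div_disj[OF P \<open>Y \<in> P\<close> X(1)] by blast
  qed
  have ub: "(0,n-1) \<in> board (Suc n)" "(1,n-1) \<in> board (Suc n)" by auto
  obtain Y0 where Y0: "Y0 \<in> P" "(0,n-1) \<in> Y0" using div_cover[OF P ub(1)] by blast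
  obtain Y1 where Y1: "Y1 \<in> P" "(1,n-1) \<in> Y1" using div_cover[OF P ub(2)] by blast
  have E0: "e0 = col n \<inter> Y0" unfolding e0_def using Un_piece[OF P Y0] by simp
  have E1: "e1 = col n \<inter> Y1 - e0" unfolding e1' using Un_piece[OF P Y1] by simp
  have ucol: "(0,n-1) \<notin> col n" "(1,n-1) \<notin> col n" using n unfolding col_def by auto
  have Qfin: "card Q = card Q" ..
  show ?thesis
  proof (cases "X \<subseteq> col n")
    case True
    then have Xc: "X = col n" using colX by blast
    have "Y0 \<noteq> X" using Y0 Xc ucol by blast
    then have "Y0 \<inter> X = {}" using P Y0(1) X(1) unfolding is_division_def by blast
    then have e0e: "e0 = {}" using E0 Xc by blast
    have "Y1 \<noteq> X" using Y1 Xc ucol by blast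
    then have "Y1 \<inter> X = {}" using P Y1(1) X(1) unfolding is_division_def by blast
    then have e1e: "e1 = {}" using E1 Xc by blast
    have NN: "N = {col n}" using Nsub X(1) True Xc unfolding N_def by blast
    then have "card Q = j" using D(3) by simp
    then have "Q \<in> Dset n j" using D(1) unfolding Dset_def by simp
    moreover have "P = ext n {} {} {col n} Q" using D(2) e0e e1e NN by simp
    ultimately show ?thesis by blast
  next
    case False
    then obtain y where y: "y \<in> X" "y \<in> board n" using div_sub[OF P X(1)] board_Suc by blast
    have pX: "is_piece X" using P X(1) unfolding is_division_def by auto
    have uX: "(0,n-1) \<in> X \<or> (1,n-1) \<in> X" using reach_col2[OF pX div_sub[OF P X(1)], of 0 y] X y by simp
    have NN: "N = {}" using Nsub False unfolding N_def by blast
    then have cQ: "card Q = Suc j" using D(3) by simp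
    show ?thesis
    proof (cases "(0,n-1) \<in> X")
      case True
      then have "Y0 = X" using div_disj[OF P Y0(1) X(1) Y0(2)] by simp
      then have e0e: "e0 = col n" using E0 colX by blast
      then have e1e: "e1 = {}" using E1 by blast
      have "Q \<in> Dset n (Suc j)" using D(1) cQ unfolding Dset_def by simp
      moreover have "P = ext n (col n) {} {} Q" using D(2) e0e e1e NN by simp
      ultimately show ?thesis by blast
    next
      case False
      then have u1X: "(1,n-1) \<in> X" using uX by simp
      then have "Y1 = X" using div_disj[OF P Y1(1) X(1) Y1(2)] by simp
      have "Y0 \<noteq> X" using Y0 False by blast
      then have "Y0 \<inter> X = {}" using P Y0(1) X(1) unfolding is_division_def by blast
      then have e0e: "e0 = {}" using E0 colX by blast
      then have e1e: "e1 = col n" using E1 \<open>Y1 = X\<close> colX by blast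
      have "sepd n Q" unfolding sepd_def
      proof (intro ballI notI)
        fix A assume A: "A \<in> Q" "(0, n - 1) \<in> A \<and> (1, n - 1) \<in> A"
        then obtain Z where Z: "Z \<in> P" "A = Z \<inter> board n" unfolding Q_def restr_def by blast
        then have "(1,n-1) \<in> Z" "(0,n-1) \<in> Z" using A by auto
        then have "Z = X" using div_disj[OF P Z(1) X(1) _ u1X] by simp
        then show False using False \<open>(0,n-1) \<in> Z\<close> by simp
      qed
      then have "Q \<in> Sset n (Suc j)" using D(1) cQ unfolding Sset_def by simp
      moreover have "P = ext n {} (col n) {} Q" using D(2) e0e e1e NN by simp
      ultimately show ?thesis by blast
    qed
  qed
qed


lemma S_sub:
  assumes n: "n \<ge> 1" and PS: "P \<in> Sset (Suc n) (Suc (Suc j))"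
  shows "P \<in> ext n {} {} {{(0,n)},{(1,n)}} ` Dset n j \<union> ext n {} {(1,n)} {{(0,n)}} ` Dset n (Suc j)
     \<union> ext n {(0,n)} {} {{(1,n)}} ` Dset n (Suc j) \<union> ext n {(0,n)} {(1,n)} {} ` Sset n (Suc (Suc j))"
proof -
  have P: "is_division (Suc n) (Suc (Suc j)) P" and sep: "sepd (Suc n) P" using PS unfolding Sset_def by auto
  have cb: "(0,n) \<in> board (Suc n)" "(1,n) \<in> board (Suc n)" by auto
  obtain X0 where X0: "X0 \<in> P" "(0,n) \<in> X0" using div_cover[OF P cb(1)] by blast
  obtain X1 where X1: "X1 \<in> P" "(1,n) \<in> X1" using div_cover[OF P cb(2)] by blast
  have n01: "(1,n) \<notin> X0" "(0,n) \<notin> X1" using sep X0 X1 unfolding sepd_def by auto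
  have X01: "X0 \<noteq> X1" using n01 X1 by blast
  have dX01: "X0 \<inter> X1 = {}" using P X0(1) X1(1) X01 unfolding is_division_def by blast
  have cX0: "col n \<inter> X0 = {(0,n)}" "col n \<inter> X1 = {(1,n)}" using X0 X1 n01 unfolding col_def by auto
  define Q where "Q = restr n P"
  define N where "N = {X\<in>P. X \<subseteq> col n}"
  define e0 where "e0 = col n \<inter> \<Union>{X\<in>P. (0,n-1) \<in> X}"
  define e1 where "e1 = col n \<inter> \<Union>{X\<in>P. (1,n-1) \<in> X} - col n \<inter> \<Union>{X\<in>P. (0,n-1) \<in> X}"
  have D: "is_division n (card Q) Q" "P = ext n e0 e1 N Q" "Suc (Suc j) = card Q + card N"
    using decomp[OF n P] unfolding Q_def N_def e0_def e1_def by auto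
  have e1': "e1 = col n \<inter> \<Union>{X\<in>P. (1,n-1) \<in> X} - e0" unfolding e0_def e1_def ..
  have Nmem: "Y = X0 \<or> Y = X1" if "Y \<in> N" for Y
  proof -
    have "Y \<subseteq> col n" "Y \<in> P" using that unfolding N_def by auto
    moreover have "Y \<noteq> {}" using div_ne[OF P] \<open>Y \<in> P\<close> by blast
    ultimately obtain c where "c \<in> Y" "c = (0,n) \<or> c = (1,n)" unfolding col_def by blast
    then show ?thesis using div_disj[OF P \<open>Y \<in> P\<close> X0(1)] div_disj[OF P \<open>Y \<in> P\<close> X1(1)] X0 X1 by blast
  qed
  have ub: "(0,n-1) \<in> board (Suc n)" "(1,n-1) \<in> board (Suc n)" by auto
  obtain Y0 where Y0: "Y0 \<in> P" "(0,n-1) \<in> Y0" using div_cover[OF P ub(1)] by blast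
  obtain Y1 where Y1: "Y1 \<in> P" "(1,n-1) \<in> Y1" using div_cover[OF P ub(2)] by blast
  have E0: "e0 = col n \<inter> Y0" unfolding e0_def using Un_piece[OF P Y0] by simp
  have E1: "e1 = col n \<inter> Y1 - e0" unfolding e1' using Un_piece[OF P Y1] by simp
  have ucol: "(0,n-1) \<notin> col n" "(1,n-1) \<notin> col n" using n unfolding col_def by auto
  have disjP: "Y \<inter> Z = {}" if "Y \<in> P" "Z \<in> P" "Y \<noteq> Z" for Y Z
    using P that unfolding is_division_def by blast
  have colsub: "col n \<subseteq> X0 \<union> X1" using X0 X1 unfolding col_def by auto
  have other: "col n \<inter> Y = {}" if "Y \<in> P" "Y \<noteq> X0" "Y \<noteq> X1" for Y
    using disjP[OF that(1) X0(1) that(2)] disjP[OF that(1) X1(1) that(3)] colsub by blast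
  have reach0: "(0,n-1) \<in> X0" if nc: "\<not> X0 \<subseteq> col n"
  proof -
    obtain y where y: "y \<in> X0" "y \<in> board n" using nc div_sub[OF P X0(1)] board_Suc by blast
    have pX: "is_piece X0" using P X0(1) unfolding is_division_def by auto
    show ?thesis using reach_col[OF pX div_sub[OF P X0(1)], of 0 y] X0 y n01 by simp
  qed
  have reach1: "(1,n-1) \<in> X1" if nc: "\<not> X1 \<subseteq> col n"
  proof -
    obtain y where y: "y \<in> X1" "y \<in> board n" using nc div_sub[OF P X1(1)] board_Suc by blast
    have pX: "is_piece X1" using P X1(1) unfolding is_division_def by auto
    show ?thesis using reach_col[OF pX div_sub[OF P X1(1)], of 1 y] X1 y n01 by simp
  qed
  have Y0c: "Y0 \<noteq> X0" if "X0 \<subseteq> col n" using that Y0 ucol by blast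
  have Y1c: "Y1 \<noteq> X1" if "X1 \<subseteq> col n" using that Y1 ucol by blast
  have X0s: "X0 = {(0,n)}" if "X0 \<subseteq> col n" using that cX0 by blast
  have X1s: "X1 = {(1,n)}" if "X1 \<subseteq> col n" using that cX0 by blast
  show ?thesis
  proof (cases "X0 \<subseteq> col n")
    case T0: True
    show ?thesis
    proof (cases "X1 \<subseteq> col n")
      case T1: True
      have NN: "N = {X0, X1}" using Nmem T0 T1 X0(1) X1(1) unfolding N_def by blast
      then have "card N = 2" using X01 by simp
      then have "card Q = j" using D(3) by simp
      then have "Q \<in> Dset n j" using D(1) unfolding Dset_def by simp
      moreover have "Y0 \<noteq> X1" "Y1 \<noteq> X0" using Y0 Y1 T1 T0 ucol by blast+
      then have "e0 = {}" "e1 = {}" using E0 E1 other[OF Y0(1) Y0c[OF T0]] other[OF Y1(1) _ Y1c[OF T1]] by auto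
      moreover have "N = {{(0,n)},{(1,n)}}" using NN X0s[OF T0] X1s[OF T1] by simp
      ultimately show ?thesis using D(2) by blast
    next
      case F1: False
      have NN: "N = {X0}" using Nmem T0 F1 X0(1) unfolding N_def by blast
      then have "card Q = Suc j" using D(3) by simp
      then have QD: "Q \<in> Dset n (Suc j)" using D(1) unfolding Dset_def by simp
      have u1: "(1,n-1) \<in> X1" using reach1 F1 .
      then have "Y1 = X1" using div_disj[OF P Y1(1) X1(1) Y1(2)] by simp
      have NN': "N = {{(0,n)}}" using NN X0s[OF T0] by simp
      show ?thesis
      proof (cases "(0,n-1) \<in> X1")
        case True
        then have "Y0 = X1" using div_disj[OF P Y0(1) X1(1) Y0(2)] by simp
        then have e0e: "e0 = {(1,n)}" using E0 cX0 by simp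
        then have e1e: "e1 = {}" using E1 \<open>Y1 = X1\<close> cX0 by simp
        have "(0,n-1) \<in> X1 \<inter> board n" using True n by simp
        then have C: "X1 \<inter> board n \<in> Q" unfolding Q_def restr_def using X1(1) by blast
        have "P = ext n {(1,n)} {} {{(0,n)}} Q" using D(2) e0e e1e NN' by simp
        also have "\<dots> = ext n {} {(1,n)} {{(0,n)}} Q"
          by (rule ext_swap[OF D(1) C]) (use True u1 n in auto)
        finally show ?thesis using QD by blast
      next
        case False
        then have "Y0 \<noteq> X1" using Y0 by blast
        then have e0e: "e0 = {}" using E0 other[OF Y0(1) Y0c[OF T0]] by simp
        then have e1e: "e1 = {(1,n)}" using E1 \<open>Y1 = X1\<close> cX0 by simp
        have "P = ext n {} {(1,n)} {{(0,n)}} Q" using D(2) e0e e1e NN' by simp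
        then show ?thesis using QD by blast
      qed
    qed
  next
    case F0: False
    have u0: "(0,n-1) \<in> X0" using reach0 F0 .
    then have "Y0 = X0" using div_disj[OF P Y0(1) X0(1) Y0(2)] by simp
    then have e0e: "e0 = {(0,n)}" using E0 cX0 by simp
    show ?thesis
    proof (cases "X1 \<subseteq> col n")
      case T1: True
      have NN: "N = {X1}" using Nmem F0 T1 X1(1) unfolding N_def by blast
      then have "card Q = Suc j" using D(3) by simp
      then have QD: "Q \<in> Dset n (Suc j)" using D(1) unfolding Dset_def by simp
      have "(1,n) \<notin> Y1" using Y1c[OF T1] div_disj[OF P Y1(1) X1(1) _ X1(2)] by blast
      then have e1e: "e1 = {}" using E1 e0e unfolding col_def by auto
      have "P = ext n {(0,n)} {} {{(1,n)}} Q" using D(2) e0e e1e NN X1s[OF T1] by simp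
      then show ?thesis using QD by blast
    next
      case F1: False
      have NN: "N = {}" using Nmem F0 F1 unfolding N_def by blast
      then have cQ: "card Q = Suc (Suc j)" using D(3) by simp
      have u1: "(1,n-1) \<in> X1" using reach1 F1 .
      then have "Y1 = X1" using div_disj[OF P Y1(1) X1(1) Y1(2)] by simp
      then have e1e: "e1 = {(1,n)}" using E1 e0e cX0 by auto
      have "sepd n Q" unfolding sepd_def
      proof (intro ballI notI)
        fix A assume A: "A \<in> Q" "(0, n - 1) \<in> A \<and> (1, n - 1) \<in> A"
        then obtain Z where Z: "Z \<in> P" "A = Z \<inter> board n" unfolding Q_def restr_def by blast
        then have "(1,n-1) \<in> Z" "(0,n-1) \<in> Z" using A by auto
        then have "Z = X0" "Z = X1" using div_disj[OF P Z(1) X0(1) _ u0] div_disj[OF P Z(1) X1(1) _ u1] by simp_all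
        then show False using X01 by simp
      qed
      then have "Q \<in> Sset n (Suc (Suc j))" using D(1) cQ unfolding Sset_def by simp
      moreover have "P = ext n {(0,n)} {(1,n)} {} Q" using D(2) e0e e1e NN by simp
      ultimately show ?thesis by blast
    qed
  qed
qed


lemma Dset_finite: "finite (Dset n k)"
proof -
  have "Dset n k \<subseteq> Pow (Pow (board n))" unfolding Dset_def is_division_def by auto
  then show ?thesis using finite_board by (meson finite_Pow_iff finite_subset)
qed

lemma Sset_sub: "Sset n k \<subseteq> Dset n k" unfolding Sset_def Dset_def by auto
lemma Tset_sub: "Tset n k \<subseteq> Dset n k" unfolding Tset_def Dset_def by auto

lemma Sset_finite: "finite (Sset n k)" using Dset_finite Sset_sub by (rule finite_subset[rotated])

lemma D_split: "card (Dset m k) = card (Tset m k) + card (Sset m k)"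
proof -
  have "Dset m k = Tset m k \<union> Sset m k" "Tset m k \<inter> Sset m k = {}"
    unfolding Dset_def Tset_def Sset_def by auto
  moreover have "finite (Tset m k)" using Dset_finite Tset_sub by (rule finite_subset[rotated])
  ultimately show ?thesis using Sset_finite card_Un_disjoint by metis
qed

lemma divQs: "is_division n k Q \<Longrightarrow> \<forall>A\<in>Q. A \<subseteq> board n \<and> A \<noteq> {}"
  using div_sub div_ne by blast

lemma card_img:
  assumes e: "e0 \<subseteq> col n" "e1 \<subseteq> col n" and N: "\<forall>X\<in>N. X \<subseteq> col n" and S: "S \<subseteq> Dset n k"
  shows "card (ext n e0 e1 N ` S) = card S"
proof (rule card_image, rule inj_on_inverseI[where g = "restr n"])
  fix Q assume "Q \<in> S"
  then have Qd: "is_division n k Q" using S unfolding Dset_def by auto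
  show "restr n (ext n e0 e1 N Q) = Q" using ext_restr[OF divQs[OF Qd] e N] by simp
qed

lemma ext_memN:
  assumes Q: "\<forall>A\<in>Q. A \<subseteq> board n \<and> A \<noteq> {}" and X: "X \<subseteq> col n" "X \<noteq> {}"
  shows "X \<in> ext n e0 e1 N Q \<longleftrightarrow> X \<in> N"
proof -
  have "X \<noteq> A \<union> EA n e0 e1 A" if "A \<in> Q" for A
  proof
    assume "X = A \<union> EA n e0 e1 A"
    then have "A \<subseteq> col n" using X by blast
    moreover have "A \<subseteq> board n" "A \<noteq> {}" using Q that by auto
    ultimately show False using col_board[of n] by blast
  qed
  then show ?thesis unfolding ext_def by blast
qed

lemma ext_EA:
  assumes Q: "\<forall>A\<in>Q. A \<subseteq> board n \<and> A \<noteq> {}" and e: "e0 \<subseteq> col n" "e1 \<subseteq> col n" "e0' \<subseteq> col n" "e1' \<subseteq> col n"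
    and N': "\<forall>X\<in>N'. X \<subseteq> col n"
    and eq: "ext n e0 e1 N Q = ext n e0' e1' N' Q" and A: "A \<in> Q"
  shows "EA n e0 e1 A = EA n e0' e1' A"
proof -
  have "A \<union> EA n e0 e1 A \<in> ext n e0' e1' N' Q" using eq A unfolding ext_def by blast
  then consider "A \<union> EA n e0 e1 A \<in> N'" | B where "B \<in> Q" "A \<union> EA n e0 e1 A = B \<union> EA n e0' e1' B"
    unfolding ext_def by blast
  then show ?thesis
  proof cases
    case 1
    then have "A \<subseteq> col n" using N' by blast
    moreover have "A \<subseteq> board n" "A \<noteq> {}" using Q A by auto
    ultimately show ?thesis using col_board[of n] by blast
  next
    case 2
    have Ab: "A \<subseteq> board n" "B \<subseteq> board n" using Q A 2(1) by auto
    have "(A \<union> EA n e0 e1 A) \<inter> board n = (B \<union> EA n e0' e1' B) \<inter> board n" using 2(2) by simp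
    then have AB: "A = B" unfolding EA_restore[OF Ab(1) e(1,2)] EA_restore[OF Ab(2) e(3,4)] .
    have r1: "(A \<union> EA n e0 e1 A) \<inter> col n = EA n e0 e1 A" using EA_sub[OF e(1,2), of A] Ab col_board[of n] by blast
    have r2: "(B \<union> EA n e0' e1' B) \<inter> col n = EA n e0' e1' B" using EA_sub[OF e(3,4), of B] Ab col_board[of n] by blast
    have "(A \<union> EA n e0 e1 A) \<inter> col n = (B \<union> EA n e0' e1' B) \<inter> col n" using 2(2) by simp
    then have "EA n e0 e1 A = EA n e0' e1' B" by (simp only: r1 r2)
    then show ?thesis using AB by simp
  qed
qed

lemma T_card:
  assumes n: "n \<ge> 1"
  shows "card (Tset (Suc n) (Suc j)) = card (Dset n j) + card (Dset n (Suc j)) + card (Sset n (Suc j))"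
proof -
  let ?I1 = "ext n {} {} {col n} ` Dset n j"
  let ?I2 = "ext n (col n) {} {} ` Dset n (Suc j)"
  let ?I3 = "ext n {} (col n) {} ` Sset n (Suc j)"
  have eq: "Tset (Suc n) (Suc j) = ?I1 \<union> ?I2 \<union> ?I3"
  proof
    show "Tset (Suc n) (Suc j) \<subseteq> ?I1 \<union> ?I2 \<union> ?I3" using T_sub[OF n] by (rule subsetI)
    have "?I1 \<subseteq> Tset (Suc n) (Suc j)" by (rule image_subsetI, rule T_img1[OF n])
    moreover have "?I2 \<subseteq> Tset (Suc n) (Suc j)" by (rule image_subsetI, rule T_img2[OF n])
    moreover have "?I3 \<subseteq> Tset (Suc n) (Suc j)" by (rule image_subsetI, rule T_img3[OF n])
    ultimately show "?I1 \<union> ?I2 \<union> ?I3 \<subseteq> Tset (Suc n) (Suc j)" by (intro Un_least)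
  qed
  have cn: "col n \<noteq> {}" unfolding col_def by simp
  have d12: "?I1 \<inter> ?I2 = {}"
  proof (rule ccontr)
    assume "?I1 \<inter> ?I2 \<noteq> {}"
    then obtain Q Q' where Q: "Q \<in> Dset n j" "Q' \<in> Dset n (Suc j)" "ext n {} {} {col n} Q = ext n (col n) {} {} Q'" by blast
    have "col n \<in> ext n {} {} {col n} Q" using ext_memN[of Q n "col n"] Q(1) cn unfolding Dset_def using divQs by blast
    moreover have "col n \<notin> ext n (col n) {} {} Q'" using ext_memN[of Q' n "col n"] Q(2) cn unfolding Dset_def using divQs by blast
    ultimately show False using Q(3) by simp
  qed
  have d13: "?I1 \<inter> ?I3 = {}"
  proof (rule ccontr)
    assume "?I1 \<inter> ?I3 \<noteq> {}"
    then obtain Q Q' where Q: "Q \<in> Dset n j" "Q' \<in> Sset n (Suc j)" "ext n {} {} {col n} Q = ext n {} (col n) {} Q'" by blast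
    have "col n \<in> ext n {} {} {col n} Q" using ext_memN[of Q n "col n"] Q(1) cn unfolding Dset_def using divQs by blast
    moreover have "col n \<notin> ext n {} (col n) {} Q'" using ext_memN[of Q' n "col n"] Q(2) cn unfolding Sset_def using divQs by blast
    ultimately show False using Q(3) by simp
  qed
  have d23: "?I2 \<inter> ?I3 = {}"
  proof (rule ccontr)
    assume "?I2 \<inter> ?I3 \<noteq> {}"
    then obtain Q Q' where Q: "Q \<in> Dset n (Suc j)" "Q' \<in> Sset n (Suc j)" "ext n (col n) {} {} Q = ext n {} (col n) {} Q'" by blast
    have Q'd: "is_division n (Suc j) Q'" and sQ: "sepd n Q'" using Q(2) unfolding Sset_def by auto
    have Qd: "is_division n (Suc j) Q" using Q(1) unfolding Dset_def by auto
    have "Q = Q'"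
      using ext_restr[OF divQs[OF Qd], of "col n" "{}" "{}"] ext_restr[OF divQs[OF Q'd], of "{}" "col n" "{}"] Q(3)
      by auto
    have "(0,n-1) \<in> board n" using n by simp
    then obtain A where A: "A \<in> Q'" "(0,n-1) \<in> A" using div_cover[OF Q'd] by blast
    have "(1,n-1) \<notin> A" using sQ A unfolding sepd_def by auto
    have "EA n (col n) {} A = EA n {} (col n) A"
      by (rule ext_EA[OF divQs[OF Q'd] _ _ _ _ _ _ A(1)]) (use Q(3) \<open>Q = Q'\<close> in auto)
    then show False using A(2) \<open>(1,n-1) \<notin> A\<close> cn unfolding EA_def by simp
  qed
  have f: "finite ?I1" "finite ?I2" "finite ?I3" using Dset_finite Sset_finite by auto
  have c1: "card ?I1 = card (Dset n j)" by (rule card_img) (auto simp: col_def)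
  have c2: "card ?I2 = card (Dset n (Suc j))" by (rule card_img) (auto simp: col_def)
  have c3: "card ?I3 = card (Sset n (Suc j))" by (rule card_img) (use Sset_sub in \<open>auto simp: col_def\<close>)
  have "card (?I1 \<union> ?I2 \<union> ?I3) = card (?I1 \<union> ?I2) + card ?I3"
    by (rule card_Un_disjoint) (use f d13 d23 in auto)
  also have "card (?I1 \<union> ?I2) = card ?I1 + card ?I2"
    by (rule card_Un_disjoint) (use f d12 in auto)
  finally show ?thesis using eq c1 c2 c3 by simp
qed


lemma memN_single:
  assumes Q: "Q \<in> Dset n k" and c: "c \<in> col n"
  shows "{c} \<in> ext n e0 e1 N Q \<longleftrightarrow> {c} \<in> N"
proof -
  have Qd: "is_division n k Q" using Q unfolding Dset_def by simp
  show ?thesis by (rule ext_memN[OF divQs[OF Qd]]) (use c in auto)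
qed

lemma S_card:
  assumes n: "n \<ge> 1"
  shows "card (Sset (Suc n) (Suc (Suc j))) = card (Dset n j) + 2 * card (Dset n (Suc j)) + card (Sset n (Suc (Suc j)))"
proof -
  let ?I1 = "ext n {} {} {{(0,n)},{(1,n)}} ` Dset n j"
  let ?I2 = "ext n {} {(1,n)} {{(0,n)}} ` Dset n (Suc j)"
  let ?I3 = "ext n {(0,n)} {} {{(1,n)}} ` Dset n (Suc j)"
  let ?I4 = "ext n {(0,n)} {(1,n)} {} ` Sset n (Suc (Suc j))"
  have eq: "Sset (Suc n) (Suc (Suc j)) = ?I1 \<union> ?I2 \<union> ?I3 \<union> ?I4"
  proof
    show "Sset (Suc n) (Suc (Suc j)) \<subseteq> ?I1 \<union> ?I2 \<union> ?I3 \<union> ?I4" using S_sub[OF n] by (rule subsetI)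
    have "?I1 \<subseteq> Sset (Suc n) (Suc (Suc j))" by (rule image_subsetI, rule S_img1[OF n])
    moreover have "?I2 \<subseteq> Sset (Suc n) (Suc (Suc j))" by (rule image_subsetI, rule S_img2[OF n])
    moreover have "?I3 \<subseteq> Sset (Suc n) (Suc (Suc j))" by (rule image_subsetI, rule S_img3[OF n])
    moreover have "?I4 \<subseteq> Sset (Suc n) (Suc (Suc j))" by (rule image_subsetI, rule S_img4[OF n])
    ultimately show "?I1 \<union> ?I2 \<union> ?I3 \<union> ?I4 \<subseteq> Sset (Suc n) (Suc (Suc j))" by (intro Un_least)
  qed
  have cc: "(0,n) \<in> col n" "(1,n) \<in> col n" unfolding col_def by auto
  have f1: "{(0,n)} \<in> P \<and> {(1,n)} \<in> P" if "P \<in> ?I1" for P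
    using that memN_single[OF _ cc(1)] memN_single[OF _ cc(2)] by auto
  have f2: "{(0,n)} \<in> P \<and> {(1,n)} \<notin> P" if "P \<in> ?I2" for P
    using that memN_single[OF _ cc(1)] memN_single[OF _ cc(2)] by auto
  have f3: "{(0,n)} \<notin> P \<and> {(1,n)} \<in> P" if "P \<in> ?I3" for P
    using that memN_single[OF _ cc(1)] memN_single[OF _ cc(2)] by auto
  have f4: "{(0,n)} \<notin> P \<and> {(1,n)} \<notin> P" if P4: "P \<in> ?I4" for P
  proof -
    obtain Q where Q: "Q \<in> Sset n (Suc (Suc j))" "P = ext n {(0,n)} {(1,n)} {} Q" using P4 by blast
    then have "Q \<in> Dset n (Suc (Suc j))" using Sset_sub by blast
    then show ?thesis using memN_single[OF _ cc(1)] memN_single[OF _ cc(2)] Q(2) by simp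
  qed
  have f: "finite ?I1" "finite ?I2" "finite ?I3" "finite ?I4" using Dset_finite Sset_finite by auto
  have c1: "card ?I1 = card (Dset n j)" by (rule card_img) (auto simp: col_def)
  have c2: "card ?I2 = card (Dset n (Suc j))" by (rule card_img) (auto simp: col_def)
  have c3: "card ?I3 = card (Dset n (Suc j))" by (rule card_img) (auto simp: col_def)
  have c4: "card ?I4 = card (Sset n (Suc (Suc j)))" by (rule card_img) (use Sset_sub in \<open>auto simp: col_def\<close>)
  have d4: "(?I1 \<union> ?I2 \<union> ?I3) \<inter> ?I4 = {}"
  proof (rule Int_emptyI)
    fix P assume a: "P \<in> ?I1 \<union> ?I2 \<union> ?I3" and b: "P \<in> ?I4"
    from a consider "P \<in> ?I1" | "P \<in> ?I2" | "P \<in> ?I3" by (elim UnE) simp_all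
    then show False using f4[OF b] f1[of P] f2[of P] f3[of P] by cases simp_all
  qed
  have d3: "(?I1 \<union> ?I2) \<inter> ?I3 = {}"
  proof (rule Int_emptyI)
    fix P assume a: "P \<in> ?I1 \<union> ?I2" and b: "P \<in> ?I3"
    from a consider "P \<in> ?I1" | "P \<in> ?I2" by (elim UnE) simp_all
    then show False using f3[OF b] f1[of P] f2[of P] by cases simp_all
  qed
  have d2: "?I1 \<inter> ?I2 = {}"
  proof (rule Int_emptyI)
    fix P assume a: "P \<in> ?I1" and b: "P \<in> ?I2"
    show False using f1[OF a] f2[OF b] by simp
  qed
  have "card (?I1 \<union> ?I2 \<union> ?I3 \<union> ?I4) = card (?I1 \<union> ?I2 \<union> ?I3) + card ?I4"
    by (rule card_Un_disjoint) (use f d4 in auto)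
  also have "card (?I1 \<union> ?I2 \<union> ?I3) = card (?I1 \<union> ?I2) + card ?I3"
    by (rule card_Un_disjoint) (use f d3 in auto)
  also have "card (?I1 \<union> ?I2) = card ?I1 + card ?I2"
    by (rule card_Un_disjoint) (use f d2 in auto)
  finally show ?thesis using eq c1 c2 c3 c4 by simp
qed


lemma board1: "board 1 = {(0,0),(1,0)}"
  unfolding board_def by auto

lemma div1:
  "is_division 1 k P \<longleftrightarrow> (P = {{(0,0),(1,0)}} \<and> k = 1) \<or> (P = {{(0,0)},{(1,0)}} \<and> k = 2)"
proof
  assume P: "is_division 1 k P"
  have sub: "Y \<subseteq> {(0,0),(1,0)}" "Y \<noteq> {}" if "Y \<in> P" for Y
    using div_sub[OF P that] div_ne[OF P that] board1 by auto
  have ck: "card P = k" using P unfolding is_division_def by simp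
  have cov: "\<exists>Y\<in>P. x \<in> Y" if "x \<in> {(0,0),(1,0)}" for x
    using div_cover[OF P] that board1 by auto
  show "(P = {{(0,0),(1,0)}} \<and> k = 1) \<or> (P = {{(0,0)},{(1,0)}} \<and> k = 2)"
  proof (cases "{(0,0),(1,0)} \<in> P")
    case True
    have "Y = {(0::nat,0::nat),(1,0)}" if YP: "Y \<in> P" for Y
    proof -
      obtain y where "y \<in> Y" using sub[OF YP] by blast
      then have "y \<in> {(0::nat,0::nat),(1,0)}" using sub[OF YP] by blast
      then show ?thesis using div_disj[OF P YP True \<open>y \<in> Y\<close>] by blast
    qed
    then have "P = {{(0,0),(1,0)}}" using True by blast
    then show ?thesis using ck by simp
  next
    case False
    have one: "Y = {(0,0)} \<or> Y = {(1,0)}" if "Y \<in> P" for Y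
      using sub[OF that] False that subset_pair[of Y "(0::nat,0::nat)" "(1,0)"] by auto
    obtain Y0 where Y0: "Y0 \<in> P" "(0,0) \<in> Y0" using cov[of "(0,0)"] by auto
    obtain Y1 where Y1: "Y1 \<in> P" "(1,0) \<in> Y1" using cov[of "(1,0)"] by auto
    have "Y0 = {(0,0)}" "Y1 = {(1,0)}" using one[OF Y0(1)] one[OF Y1(1)] Y0 Y1 by auto
    then have "P = {{(0,0)},{(1,0)}}" using one Y0 Y1 by blast
    then show ?thesis using ck by simp
  qed
next
  assume "(P = {{(0,0),(1,0)}} \<and> k = 1) \<or> (P = {{(0,0)},{(1,0)}} \<and> k = 2)"
  then show "is_division 1 k P"
  proof
    assume "P = {{(0,0),(1,0)}} \<and> k = 1"
    moreover have "is_piece {(0::nat,0::nat),(1,0)}"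
      using piece_pair[of "(1,0)" "(0,0)"] by (simp add: adjacent_def)
    ultimately show ?thesis unfolding is_division_def board1 by simp
  next
    assume "P = {{(0,0)},{(1,0)}} \<and> k = 2"
    then show ?thesis unfolding is_division_def board1 by (auto simp: piece_single)
  qed
qed

lemma d_eq: "d k n = card (Dset n k)" unfolding d_def Dset_def ..
lemma s_eq: "s k n = card (Sset n k)" unfolding s_def Sset_def sepd_def ..

lemma base_vals:
  "card (Dset 1 1) = 1" "card (Dset 1 2) = 1" "card (Dset 1 3) = 0"
  "card (Sset 1 2) = 1" "card (Sset 1 3) = 0"
proof -
  have "Dset 1 1 = {{{(0,0),(1,0)}}}" unfolding Dset_def div1 by auto
  then show "card (Dset 1 1) = 1" by simp
  have D2: "Dset 1 2 = {{{(0,0)},{(1,0)}}}" unfolding Dset_def div1 by auto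
  then show "card (Dset 1 2) = 1" by simp
  have "Dset 1 3 = {}" unfolding Dset_def div1 by auto
  then show "card (Dset 1 3) = 0" by simp
  have "Sset 1 2 = {{{(0,0)},{(1,0)}}}" unfolding Sset_def div1 sepd_def by auto
  then show "card (Sset 1 2) = 1" by simp
  have "Sset 1 3 = {}" unfolding Sset_def div1 by auto
  then show "card (Sset 1 3) = 0" by simp
qed

lemma D0: "n \<ge> 1 \<Longrightarrow> Dset n 0 = {}"
proof (rule ccontr)
  assume n: "n \<ge> 1" and "Dset n 0 \<noteq> {}"
  then obtain P where P: "is_division n 0 P" unfolding Dset_def by auto
  then have "P = {}" using div_finite[OF P] unfolding is_division_def by simp
  moreover have "(0,0) \<in> board n" using n by simp
  ultimately show False using div_cover[OF P] by blast
qed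

lemma S1: "n \<ge> 1 \<Longrightarrow> Sset n 1 = {}"
proof (rule ccontr)
  assume n: "n \<ge> 1" and "Sset n 1 \<noteq> {}"
  then obtain P where P: "is_division n 1 P" "sepd n P" unfolding Sset_def by auto
  then obtain A where "P = {A}" unfolding is_division_def using card_1_singletonE by metis
  then have "A = board n" using P(1) unfolding is_division_def by simp
  then show False using P(2) \<open>P = {A}\<close> n unfolding sepd_def by simp
qed

lemma main_rec:
  "real (card (Dset (Suc m) 1)) = 1 \<and>
   real (card (Sset (Suc m) 2)) = 2 * real (Suc m) - 1 \<and>
   real (card (Dset (Suc m) 2)) = 2 * real (Suc m) ^ 2 - real (Suc m) \<and>
   real (card (Sset (Suc m) 3)) = 4/3 * real (Suc m) ^ 3 - 3 * real (Suc m) ^ 2 + 8/3 * real (Suc m) - 1 \<and>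
   real (card (Dset (Suc m) 3)) = 2/3 * real (Suc m) ^ 4 - 4/3 * real (Suc m) ^ 3 + 11/6 * real (Suc m) ^ 2
           - 13/6 * real (Suc m) + 1"
proof (induction m)
  case 0
  then show ?case using base_vals by (simp add: numeral_eq_Suc)
next
  case (Suc m)
  define n where "n = Suc m"
  have n: "n \<ge> 1" unfolding n_def by simp
  have T1: "card (Tset (Suc n) 1) = card (Dset n 0) + card (Dset n 1) + card (Sset n 1)"
    using T_card[OF n, of 0] by simp
  have T2: "card (Tset (Suc n) 2) = card (Dset n 1) + card (Dset n 2) + card (Sset n 2)"
    using T_card[OF n, of 1] by (simp add: numeral_2_eq_2)
  have T3: "card (Tset (Suc n) 3) = card (Dset n 2) + card (Dset n 3) + card (Sset n 3)"
    using T_card[OF n, of 2] by (simp add: numeral_3_eq_3 numeral_2_eq_2)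
  have S2: "card (Sset (Suc n) 2) = card (Dset n 0) + 2 * card (Dset n 1) + card (Sset n 2)"
    using S_card[OF n, of 0] by (simp add: numeral_2_eq_2)
  have S3: "card (Sset (Suc n) 3) = card (Dset n 1) + 2 * card (Dset n 2) + card (Sset n 3)"
    using S_card[OF n, of 1] by (simp add: numeral_3_eq_3 numeral_2_eq_2)
  have z: "card (Dset n 0) = 0" "card (Sset n 1) = 0" "card (Sset (Suc n) 1) = 0"
    using D0[OF n] S1[OF n] S1[of "Suc n"] by auto
  have DD: "card (Dset (Suc n) k) = card (Tset (Suc n) k) + card (Sset (Suc n) k)" for k
    by (rule D_split)
  have IH: "real (card (Dset n 1)) = 1"
     "real (card (Sset n 2)) = 2 * real n - 1"
     "real (card (Dset n 2)) = 2 * real n ^ 2 - real n"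
     "real (card (Sset n 3)) = 4/3 * real n ^ 3 - 3 * real n ^ 2 + 8/3 * real n - 1"
     "real (card (Dset n 3)) = 2/3 * real n ^ 4 - 4/3 * real n ^ 3 + 11/6 * real n ^ 2 - 13/6 * real n + 1"
    using Suc.IH unfolding n_def by auto
  have e1: "real (card (Dset (Suc n) 1)) = 1" using DD[of 1] T1 z IH(1) by simp
  have e2: "real (card (Sset (Suc n) 2)) = 2 * real (Suc n) - 1" using S2 z IH by simp
  have e3: "real (card (Dset (Suc n) 2)) = 2 * real (Suc n) ^ 2 - real (Suc n)"
  proof -
    have "real (card (Dset (Suc n) 2)) = real (card (Dset n 1)) + real (card (Dset n 2)) + real (card (Sset n 2))
       + (real (card (Dset n 0)) + 2 * real (card (Dset n 1)) + real (card (Sset n 2)))"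
      using DD[of 2] T2 S2 by simp
    then show ?thesis using z IH by (simp add: algebra_simps power2_eq_square)
  qed
  have e4: "real (card (Sset (Suc n) 3)) = 4/3 * real (Suc n) ^ 3 - 3 * real (Suc n) ^ 2 + 8/3 * real (Suc n) - 1"
  proof -
    have "real (card (Sset (Suc n) 3)) = real (card (Dset n 1)) + 2 * real (card (Dset n 2)) + real (card (Sset n 3))"
      using S3 by simp
    then show ?thesis using IH by (simp add: algebra_simps power2_eq_square power3_eq_cube)
  qed
  have e5: "real (card (Dset (Suc n) 3)) = 2/3 * real (Suc n) ^ 4 - 4/3 * real (Suc n) ^ 3 + 11/6 * real (Suc n) ^ 2
           - 13/6 * real (Suc n) + 1"
  proof -
    have "real (card (Dset (Suc n) 3)) = real (card (Dset n 2)) + real (card (Dset n 3)) + real (card (Sset n 3))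
       + (real (card (Dset n 1)) + 2 * real (card (Dset n 2)) + real (card (Sset n 3)))"
      using DD[of 3] T3 S3 by simp
    also have "\<dots> = (2 * real n ^ 2 - real n) + (2/3 * real n ^ 4 - 4/3 * real n ^ 3 + 11/6 * real n ^ 2 - 13/6 * real n + 1)
        + (4/3 * real n ^ 3 - 3 * real n ^ 2 + 8/3 * real n - 1)
        + (1 + 2 * (2 * real n ^ 2 - real n) + (4/3 * real n ^ 3 - 3 * real n ^ 2 + 8/3 * real n - 1))"
      unfolding IH ..
    also have "\<dots> = 2/3 * real (Suc n) ^ 4 - 4/3 * real (Suc n) ^ 3 + 11/6 * real (Suc n) ^ 2
           - 13/6 * real (Suc n) + 1"
      unfolding of_nat_Suc by algebra
    finally show ?thesis .
  qed
  show ?case using e1 e2 e3 e4 e5 unfolding n_def by simp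
qed

theorem mainTheorem4:
  fixes n :: nat
  assumes "n \<ge> 1"
  shows "real (s 3 n) = 4/3 * real n ^ 3 - 3 * real n ^ 2 + 8/3 * real n - 1
       \<and> real (d 3 n) = 2/3 * real n ^ 4 - 4/3 * real n ^ 3 + 11/6 * real n ^ 2
           - 13/6 * real n + 1"
proof -
  obtain m where "n = Suc m" using assms by (cases n) auto
  then show ?thesis using main_rec[of m] unfolding s_eq d_eq by simp
qed

end
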